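(* Let $A$ be an edge matrix over $\mathcal G$. Then $R_A=\overline{\operatorname{span}}\{\rho_i,\delta_i:i\in\mathcal G\}$ and $\mathfrak R_A=\operatorname{span}_{\mathbb Z}\{\rho_i,\delta_i:i\in\mathcal G\}$ (the additive group generated by the $\rho_i$ and $\delta_i$).
   Context: An edge matrix is a $0$-$1$ matrix $A$ whose index set $\mathcal G$ is the edge set of a directed graph, with $A(i,j)=1$ if the range of edge $i$ equals the source of edge $j$, and $A(i,j)=0$ otherwise. For $i\in\mathcal G$, $\rho_i(j)=A(i,j)$ is the $i$-th row of $A$ as a function on $\mathcal G$ and $\delta_i$ is the indicator function of $\{i\}$. $R_A$ is the $C^*$-subalgebra of $\ell^\infty(\mathcal G)$ generated by $\{\rho_i,\delta_i:i\in\mathcal G\}$, and $\mathfrak R_A$ is the subring of $\mathbb Z^{\mathcal G}$ generated by the same functions. *)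

theory Defs
  imports "HOL-Analysis.Analysis"
begin

text \<open>A directed graph with edge set the type 'e, source map src and range map rng.
  The edge matrix: A(i,j) = 1 iff rng i = src j.\<close>

definition edge_matrix :: "('e \<Rightarrow> 'v) \<Rightarrow> ('e \<Rightarrow> 'v) \<Rightarrow> 'e \<Rightarrow> 'e \<Rightarrow> 'a::zero_neq_one" where
  "edge_matrix src rng i j = (if rng i = src j then 1 else 0)"

definition row_fn :: "('e \<Rightarrow> 'v) \<Rightarrow> ('e \<Rightarrow> 'v) \<Rightarrow> 'e \<Rightarrow> 'e \<Rightarrow> 'a::zero_neq_one" where
  "row_fn src rng i = (\<lambda>j. edge_matrix src rng i j)"

definition delta_fn :: "'e \<Rightarrow> 'e \<Rightarrow> 'a::zero_neq_one" where
  "delta_fn i = (\<lambda>j. if j = i then 1 else 0)"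

definition gens :: "('e \<Rightarrow> 'v) \<Rightarrow> ('e \<Rightarrow> 'v) \<Rightarrow> ('e \<Rightarrow> 'a::zero_neq_one) set" where
  "gens src rng = {row_fn src rng i | i. True} \<union> {delta_fn i | i. True}"

definition linfty :: "('e \<Rightarrow> complex) set" where
  "linfty = {f. bounded (range f)}"

definition sup_closure :: "('e \<Rightarrow> complex) set \<Rightarrow> ('e \<Rightarrow> complex) set" where
  "sup_closure S = {f \<in> linfty. \<forall>\<epsilon>>0. \<exists>g\<in>S. \<forall>x. norm (f x - g x) \<le> \<epsilon>}"

definition is_cstar_subalgebra :: "('e \<Rightarrow> complex) set \<Rightarrow> bool" where
  "is_cstar_subalgebra S \<longleftrightarrow> S \<subseteq> linfty \<and> (\<lambda>_. 0) \<in> S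
     \<and> (\<forall>f\<in>S. \<forall>g\<in>S. (\<lambda>x. f x + g x) \<in> S)
     \<and> (\<forall>c. \<forall>f\<in>S. (\<lambda>x. c * f x) \<in> S)
     \<and> (\<forall>f\<in>S. \<forall>g\<in>S. (\<lambda>x. f x * g x) \<in> S)
     \<and> (\<forall>f\<in>S. (\<lambda>x. cnj (f x)) \<in> S)
     \<and> sup_closure S \<subseteq> S"

definition cstar_generated :: "('e \<Rightarrow> complex) set \<Rightarrow> ('e \<Rightarrow> complex) set" where
  "cstar_generated X = \<Inter> {S. is_cstar_subalgebra S \<and> X \<subseteq> S}"

definition is_subring_fun :: "('e \<Rightarrow> int) set \<Rightarrow> bool" where
  "is_subring_fun S \<longleftrightarrow> (\<lambda>_. 0) \<in> S
     \<and> (\<forall>f\<in>S. \<forall>g\<in>S. (\<lambda>x. f x + g x) \<in> S)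
     \<and> (\<forall>f\<in>S. (\<lambda>x. - f x) \<in> S)
     \<and> (\<forall>f\<in>S. \<forall>g\<in>S. (\<lambda>x. f x * g x) \<in> S)"

definition ring_generated :: "('e \<Rightarrow> int) set \<Rightarrow> ('e \<Rightarrow> int) set" where
  "ring_generated X = \<Inter> {S. is_subring_fun S \<and> X \<subseteq> S}"

definition fun_span :: "('e \<Rightarrow> 'a::comm_ring) set \<Rightarrow> ('e \<Rightarrow> 'a) set" where
  "fun_span X = {(\<lambda>x. \<Sum>g\<in>F. c g * g x) | F c. finite F \<and> F \<subseteq> X}"

abbreviation R_A :: "('e \<Rightarrow> 'v) \<Rightarrow> ('e \<Rightarrow> 'v) \<Rightarrow> ('e \<Rightarrow> complex) set" where
  "R_A src rng \<equiv> cstar_generated (gens src rng)"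

abbreviation frakR_A :: "('e \<Rightarrow> 'v) \<Rightarrow> ('e \<Rightarrow> 'v) \<Rightarrow> ('e \<Rightarrow> int) set" where
  "frakR_A src rng \<equiv> ring_generated (gens src rng)"

end

theory Submission
  imports Defs
begin

lemma span_intro: "finite F \<Longrightarrow> F \<subseteq> X \<Longrightarrow> (\<lambda>x. \<Sum>g\<in>F. c g * g x) \<in> fun_span X"
  unfolding fun_span_def by blast

lemma span_zero: "(\<lambda>_. 0) \<in> fun_span X"
  unfolding fun_span_def by (rule CollectI, rule exI[of _ "{}"], auto)

lemma span_gen:
  fixes g :: "'e \<Rightarrow> 'a::comm_ring_1"
  shows "g \<in> X \<Longrightarrow> g \<in> fun_span X"
proof -
  assume "g \<in> X"
  then have "(\<lambda>x. \<Sum>g'\<in>{g}. 1 * g' x) \<in> fun_span X" by (intro span_intro) auto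
  then show ?thesis by simp
qed

lemma span_extend:
  fixes c :: "('e \<Rightarrow> 'a::comm_ring) \<Rightarrow> 'a"
  assumes "finite F'" "F \<subseteq> F'"
  shows "(\<Sum>g\<in>F. c g * g x) = (\<Sum>g\<in>F'. (if g \<in> F then c g else 0) * g x)"
proof -
  have "(\<Sum>g\<in>F'. (if g \<in> F then c g else 0) * g x) = (\<Sum>g\<in>F. (if g \<in> F then c g else 0) * g x)"
    using assms by (intro sum.mono_neutral_right) auto
  also have "\<dots> = (\<Sum>g\<in>F. c g * g x)" by simp
  finally show ?thesis by simp
qed

lemma span_add:
  fixes f h :: "'e \<Rightarrow> 'a::comm_ring"
  assumes "f \<in> fun_span X" "h \<in> fun_span X"
  shows "(\<lambda>x. f x + h x) \<in> fun_span X"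
proof -
  obtain F c where F: "f = (\<lambda>x. \<Sum>g\<in>F. c g * g x)" "finite F" "F \<subseteq> X"
    using assms(1) unfolding fun_span_def by blast
  obtain G d where G: "h = (\<lambda>x. \<Sum>g\<in>G. d g * g x)" "finite G" "G \<subseteq> X"
    using assms(2) unfolding fun_span_def by blast
  let ?c = "\<lambda>g. (if g \<in> F then c g else 0) + (if g \<in> G then d g else 0)"
  have "(\<lambda>x. f x + h x) = (\<lambda>x. \<Sum>g\<in>F \<union> G. ?c g * g x)"
  proof
    fix x
    have "f x = (\<Sum>g\<in>F \<union> G. (if g \<in> F then c g else 0) * g x)"
      using F span_extend[of "F \<union> G" F c x] G by auto
    moreover have "h x = (\<Sum>g\<in>F \<union> G. (if g \<in> G then d g else 0) * g x)"
      using G span_extend[of "F \<union> G" G d x] F by auto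
    ultimately show "f x + h x = (\<Sum>g\<in>F \<union> G. ?c g * g x)"
      by (simp add: sum.distrib distrib_right)
  qed
  then show ?thesis using F G span_intro[of "F \<union> G" X ?c] by simp
qed

lemma span_scale:
  fixes f :: "'e \<Rightarrow> 'a::comm_ring"
  assumes "f \<in> fun_span X"
  shows "(\<lambda>x. a * f x) \<in> fun_span X"
proof -
  obtain F c where F: "f = (\<lambda>x. \<Sum>g\<in>F. c g * g x)" "finite F" "F \<subseteq> X"
    using assms(1) unfolding fun_span_def by blast
  have "(\<lambda>x. a * f x) = (\<lambda>x. \<Sum>g\<in>F. (a * c g) * g x)"
    using F by (simp add: sum_distrib_left mult.assoc)
  then show ?thesis using F span_intro[of F X "\<lambda>g. a * c g"] by simp
qed

lemma span_induct[consumes 1, case_names zero add gen]: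
  fixes f :: "'e \<Rightarrow> 'a::comm_ring"
  assumes "f \<in> fun_span X" "P (\<lambda>_. 0)"
    "\<And>f h. P f \<Longrightarrow> P h \<Longrightarrow> P (\<lambda>x. f x + h x)"
    "\<And>c g. g \<in> X \<Longrightarrow> P (\<lambda>x. c * g x)"
  shows "P f"
proof -
  obtain F c where F: "f = (\<lambda>x. \<Sum>g\<in>F. c g * g x)" "finite F" "F \<subseteq> X"
    using assms(1) unfolding fun_span_def by blast
  have "F \<subseteq> X \<Longrightarrow> P (\<lambda>x. \<Sum>g\<in>F. c g * g x)" using F(2)
  proof (induction F rule: finite_induct)
    case empty then show ?case using assms(2) by simp
  next
    case (insert a F)
    have "P (\<lambda>x. c a * a x + (\<Sum>g\<in>F. c g * g x))"
      using insert assms(3,4) by auto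
    then show ?case using insert by simp
  qed
  then show ?thesis using F by simp
qed

lemma span_mono: "X \<subseteq> Y \<Longrightarrow> fun_span X \<subseteq> fun_span Y"
  unfolding fun_span_def by blast

lemma gens_prod:
  fixes src rng :: "'e \<Rightarrow> 'v"
  assumes "g \<in> (gens src rng :: ('e \<Rightarrow> 'a::comm_ring_1) set)" "g' \<in> gens src rng"
  shows "\<exists>a h. h \<in> gens src rng \<and> (\<lambda>x. g x * g' x) = (\<lambda>x. a * h x)"
proof -
  have r: "row_fn src rng i \<in> (gens src rng :: ('e \<Rightarrow> 'a) set)" for i
    unfolding gens_def by blast
  have d: "delta_fn i \<in> (gens src rng :: ('e \<Rightarrow> 'a) set)" for i
    unfolding gens_def by blast
  consider (rr) i j where "g = row_fn src rng i" "g' = row_fn src rng j"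
    | (rd) i j where "g = row_fn src rng i" "g' = delta_fn j"
    | (dr) i j where "g = delta_fn i" "g' = row_fn src rng j"
    | (dd) i j where "g = delta_fn i" "g' = delta_fn j"
    using assms unfolding gens_def by blast
  then show ?thesis
  proof cases
    case rr
    show ?thesis
      apply (rule exI[of _ "if rng i = rng j then 1 else 0"], rule exI[of _ "row_fn src rng i"])
      using rr r by (auto simp: row_fn_def edge_matrix_def fun_eq_iff)
  next
    case rd
    show ?thesis
      apply (rule exI[of _ "row_fn src rng i j"], rule exI[of _ "delta_fn j"])
      using rd d by (auto simp: row_fn_def edge_matrix_def delta_fn_def)
  next
    case dr
    show ?thesis
      apply (rule exI[of _ "row_fn src rng j i"], rule exI[of _ "delta_fn i"])
      using dr d by (auto simp: row_fn_def edge_matrix_def delta_fn_def)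
  next
    case dd
    show ?thesis
      apply (rule exI[of _ "if i = j then 1 else 0"], rule exI[of _ "delta_fn i"])
      using dd d by (auto simp: delta_fn_def)
  qed
qed

lemma span_mult:
  fixes src rng :: "'e \<Rightarrow> 'v"
  assumes "f \<in> fun_span (gens src rng :: ('e \<Rightarrow> 'a::comm_ring_1) set)"
    "h \<in> fun_span (gens src rng :: ('e \<Rightarrow> 'a) set)"
  shows "(\<lambda>x. f x * h x) \<in> fun_span (gens src rng)"
proof -
  let ?S = "fun_span (gens src rng :: ('e \<Rightarrow> 'a) set)"
  have gh: "(\<lambda>x. g x * h x) \<in> ?S" if g: "g \<in> gens src rng" for g
    using assms(2)
  proof (induction h rule: span_induct)
    case zero then show ?case using span_zero by simp
  next
    case (add f1 f2)
    then show ?case using span_add[OF add] by (simp add: distrib_left)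
  next
    case (gen c g')
    obtain a k where k: "k \<in> gens src rng" "(\<lambda>x. g x * g' x) = (\<lambda>x. a * k x)"
      using gens_prod[OF g gen] by blast
    have "(\<lambda>x. g x * (c * g' x)) = (\<lambda>x. (c * a) * k x)"
    proof
      fix x
      have "g x * g' x = a * k x" using k(2) by meson
      then show "g x * (c * g' x) = (c * a) * k x"
        by (metis mult.assoc mult.left_commute)
    qed
    then show ?case using span_scale[OF span_gen[OF k(1)]] by simp
  qed
  show ?thesis using assms(1)
  proof (induction f rule: span_induct)
    case zero then show ?case using span_zero by simp
  next
    case (add f1 f2)
    then show ?case using span_add[OF add] by (simp add: distrib_right)
  next
    case (gen c g)
    show ?case using span_scale[OF gh[OF gen], of c] by (simp add: mult.assoc)
  qed
qed


lemma linfty_iff: "f \<in> linfty \<longleftrightarrow> (\<exists>B. \<forall>x. norm (f x) \<le> B)"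
  unfolding linfty_def bounded_iff by auto

lemma gens_values: "g \<in> gens src rng \<Longrightarrow> g x = 0 \<or> g x = 1"
  unfolding gens_def row_fn_def edge_matrix_def delta_fn_def by auto

lemma span_linfty:
  assumes "f \<in> fun_span (gens src rng :: ('e \<Rightarrow> complex) set)"
  shows "f \<in> linfty"
  using assms
proof (induction f rule: span_induct)
  case zero then show ?case by (auto simp: linfty_iff)
next
  case (add f h)
  then obtain B C where "\<forall>x. norm (f x) \<le> B" "\<forall>x. norm (h x) \<le> C" by (auto simp: linfty_iff)
  then have "\<forall>x. norm (f x + h x) \<le> B + C" by (meson add_mono norm_triangle_le)
  then show ?case by (auto simp: linfty_iff)
next
  case (gen c g)
  have "\<forall>x. norm (c * g x) \<le> norm c"
    using gens_values[OF gen] by (metis mult_1_right mult_zero_right norm_zero norm_ge_zero order_refl)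
  then show ?case by (auto simp: linfty_iff)
qed

lemma span_cnj:
  assumes "f \<in> fun_span (gens src rng :: ('e \<Rightarrow> complex) set)"
  shows "(\<lambda>x. cnj (f x)) \<in> fun_span (gens src rng)"
  using assms
proof (induction f rule: span_induct)
  case zero then show ?case using span_zero by simp
next
  case (add f h)
  then show ?case using span_add[OF add] by simp
next
  case (gen c g)
  have "(\<lambda>x. cnj (c * g x)) = (\<lambda>x. cnj c * g x)"
    using gens_values[OF gen] by (auto simp: fun_eq_iff) (metis complex_cnj_one complex_cnj_zero)
  then show ?case using span_scale[OF span_gen[OF gen]] by simp
qed

lemma span_sub:
  fixes S :: "('e \<Rightarrow> 'a::comm_ring_1) set"
  assumes "X \<subseteq> S" "(\<lambda>_. 0) \<in> S" "\<forall>f\<in>S. \<forall>g\<in>S. (\<lambda>x. f x + g x) \<in> S"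
    "\<And>c g. g \<in> X \<Longrightarrow> (\<lambda>x. c * g x) \<in> S"
  shows "fun_span X \<subseteq> S"
proof
  fix f assume "f \<in> fun_span X"
  then show "f \<in> S"
  proof (induction f rule: span_induct)
    case zero then show ?case using assms(2) .
  next
    case (add f h) then show ?case using assms(3) by blast
  next
    case (gen c g) then show ?case using assms(4) by blast
  qed
qed

lemma cl_linfty: "f \<in> sup_closure S \<Longrightarrow> f \<in> linfty"
  unfolding sup_closure_def by blast

lemma cl_approx: "f \<in> sup_closure S \<Longrightarrow> e > 0 \<Longrightarrow> \<exists>g\<in>S. \<forall>x. norm (f x - g x) \<le> e"
  unfolding sup_closure_def by blast

lemma cl_intro: "f \<in> linfty \<Longrightarrow> (\<And>e. e > 0 \<Longrightarrow> \<exists>g\<in>S. \<forall>x. norm (f x - g x) \<le> e) \<Longrightarrow> f \<in> sup_closure S"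
  unfolding sup_closure_def by blast

lemma cl_sup: "S \<subseteq> linfty \<Longrightarrow> S \<subseteq> sup_closure S"
proof
  fix f assume "S \<subseteq> linfty" "f \<in> S"
  then show "f \<in> sup_closure S" unfolding sup_closure_def
    by (intro CollectI conjI) (auto intro!: bexI[of _ f])
qed

lemma cl_mono:
  assumes ST: "S \<subseteq> T" shows "sup_closure S \<subseteq> sup_closure T"
proof
  fix f assume f: "f \<in> sup_closure S"
  show "f \<in> sup_closure T"
  proof (rule cl_intro)
    show "f \<in> linfty" by (rule cl_linfty[OF f])
    fix e :: real assume "e > 0"
    then obtain g where "g \<in> S" "\<forall>x. norm (f x - g x) \<le> e" using cl_approx[OF f] by blast
    then show "\<exists>g\<in>T. \<forall>x. norm (f x - g x) \<le> e" using ST by blast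
  qed
qed

lemma cl_idem: "sup_closure (sup_closure S) \<subseteq> sup_closure S"
proof
  fix f assume f: "f \<in> sup_closure (sup_closure S)"
  have "\<exists>g\<in>S. \<forall>x. norm (f x - g x) \<le> e" if e: "e > 0" for e
  proof -
    obtain h where h: "h \<in> sup_closure S" "\<forall>x. norm (f x - h x) \<le> e/2"
      using cl_approx[OF f, of "e/2"] e by auto
    obtain g where g: "g \<in> S" "\<forall>x. norm (h x - g x) \<le> e/2"
      using cl_approx[OF h(1), of "e/2"] e by auto
    have "\<forall>x. norm (f x - g x) \<le> e"
    proof
      fix x
      have "norm (f x - g x) \<le> norm (f x - h x) + norm (h x - g x)"
        by (rule norm_diff_triangle_le) auto
      then show "norm (f x - g x) \<le> e" using h(2) g(2) by (smt (verit) field_sum_of_halves)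
    qed
    then show ?thesis using g by blast
  qed
  then show "f \<in> sup_closure S" using cl_linfty[OF f] by (intro cl_intro) auto
qed


lemma cl_add:
  assumes "f \<in> sup_closure S" "h \<in> sup_closure S" "\<forall>f\<in>S. \<forall>g\<in>S. (\<lambda>x. f x + g x) \<in> S"
  shows "(\<lambda>x. f x + h x) \<in> sup_closure S"
proof (rule cl_intro)
  obtain B C where "\<forall>x. norm (f x) \<le> B" "\<forall>x. norm (h x) \<le> C"
    using cl_linfty[OF assms(1)] cl_linfty[OF assms(2)] by (auto simp: linfty_iff)
  then have "\<forall>x. norm (f x + h x) \<le> B + C" by (meson add_mono norm_triangle_le)
  then show "(\<lambda>x. f x + h x) \<in> linfty" by (auto simp: linfty_iff)
next
  fix e :: real assume e: "e > 0"
  obtain f' where f': "f' \<in> S" "\<forall>x. norm (f x - f' x) \<le> e/2" using cl_approx[OF assms(1)] e by (meson half_gt_zero)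
  obtain h' where h': "h' \<in> S" "\<forall>x. norm (h x - h' x) \<le> e/2" using cl_approx[OF assms(2)] e by (meson half_gt_zero)
  have "\<forall>x. norm ((f x + h x) - (f' x + h' x)) \<le> e"
  proof
    fix x
    have "norm ((f x + h x) - (f' x + h' x)) = norm ((f x - f' x) + (h x - h' x))" by (simp add: algebra_simps)
    also have "\<dots> \<le> norm (f x - f' x) + norm (h x - h' x)" by (rule norm_triangle_ineq)
    also have "\<dots> \<le> e" using f'(2) h'(2) by (smt (verit) field_sum_of_halves)
    finally show "norm ((f x + h x) - (f' x + h' x)) \<le> e" .
  qed
  then show "\<exists>g\<in>S. \<forall>x. norm (f x + h x - g x) \<le> e" using f' h' assms(3)
    by (intro bexI[of _ "\<lambda>x. f' x + h' x"]) auto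
qed

lemma cl_scale:
  assumes "f \<in> sup_closure S" "S \<subseteq> linfty" "(\<lambda>_. 0) \<in> S" "\<forall>c. \<forall>f\<in>S. (\<lambda>x. c * f x) \<in> S"
  shows "(\<lambda>x. c * f x) \<in> sup_closure S"
proof (cases "c = 0")
  case True
  then show ?thesis using cl_sup[OF assms(2)] assms(3) by auto
next
  case False
  show ?thesis
  proof (rule cl_intro)
    obtain B where "\<forall>x. norm (f x) \<le> B"
      using cl_linfty[OF assms(1)] by (auto simp: linfty_iff)
    then have "\<forall>x. norm (c * f x) \<le> norm c * B" by (simp add: mult_left_mono norm_mult)
    then show "(\<lambda>x. c * f x) \<in> linfty" by (auto simp: linfty_iff)
  next
    fix e :: real assume e: "e > 0"
    have ce: "e / norm c > 0" using e False by simp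
    obtain f' where f': "f' \<in> S" "\<forall>x. norm (f x - f' x) \<le> e / norm c" using cl_approx[OF assms(1) ce] by blast
    have "\<forall>x. norm (c * f x - c * f' x) \<le> e"
    proof
      fix x
      have "norm (c * f x - c * f' x) = norm c * norm (f x - f' x)"
        by (simp add: norm_mult[symmetric] right_diff_distrib)
      also have "\<dots> \<le> norm c * (e / norm c)" by (rule mult_left_mono) (use f'(2) in auto)
      also have "\<dots> = e" using False by simp
      finally show "norm (c * f x - c * f' x) \<le> e" .
    qed
    then show "\<exists>g\<in>S. \<forall>x. norm (c * f x - g x) \<le> e" using f' assms(4)
      by (intro bexI[of _ "\<lambda>x. c * f' x"]) auto
  qed
qed

lemma cl_cnj:
  assumes "f \<in> sup_closure S" "\<forall>f\<in>S. (\<lambda>x. cnj (f x)) \<in> S"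
  shows "(\<lambda>x. cnj (f x)) \<in> sup_closure S"
proof (rule cl_intro)
  obtain B where "\<forall>x. norm (f x) \<le> B"
    using cl_linfty[OF assms(1)] by (auto simp: linfty_iff)
  then show "(\<lambda>x. cnj (f x)) \<in> linfty" by (auto simp: linfty_iff)
next
  fix e :: real assume e: "e > 0"
  obtain f' where f': "f' \<in> S" "\<forall>x. norm (f x - f' x) \<le> e" using cl_approx[OF assms(1) e] by blast
  have "\<forall>x. norm (cnj (f x) - cnj (f' x)) \<le> e"
    using f'(2) by (metis complex_cnj_diff complex_mod_cnj)
  then show "\<exists>g\<in>S. \<forall>x. norm (cnj (f x) - g x) \<le> e" using f' assms(2)
    by (intro bexI[of _ "\<lambda>x. cnj (f' x)"]) auto
qed

lemma cl_mult:
  assumes "f \<in> sup_closure S" "h \<in> sup_closure S" "\<forall>f\<in>S. \<forall>g\<in>S. (\<lambda>x. f x * g x) \<in> S"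
  shows "(\<lambda>x. f x * h x) \<in> sup_closure S"
proof -
  obtain B0 C0 where B0: "\<forall>x. norm (f x) \<le> B0" and C0: "\<forall>x. norm (h x) \<le> C0"
    using cl_linfty[OF assms(1)] cl_linfty[OF assms(2)] by (auto simp: linfty_iff)
  define B where "B = max B0 0"
  define C where "C = max C0 0"
  have B: "\<forall>x. norm (f x) \<le> B" "B \<ge> 0" using B0 unfolding B_def by (auto intro: max.coboundedI1)
  have C: "\<forall>x. norm (h x) \<le> C" "C \<ge> 0" using C0 unfolding C_def by (auto intro: max.coboundedI1)
  show ?thesis
  proof (rule cl_intro)
    have "\<forall>x. norm (f x * h x) \<le> B * C" using B C by (simp add: mult_mono norm_mult)
    then show "(\<lambda>x. f x * h x) \<in> linfty" by (auto simp: linfty_iff)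
  next
    fix e :: real assume e: "e > 0"
    define d where "d = min 1 (e / (B + C + 1))"
    have pos: "B + C + 1 > 0" using B(2) C(2) by simp
    have d12: "d > 0" "d \<le> 1" "d \<le> e / (B + C + 1)"
      using e pos unfolding d_def by auto
    have d3: "d * (B + C + 1) \<le> e" using d12(3) pos by (simp add: pos_le_divide_eq)
    note d = d12(1,2) d3
    obtain f' where f': "f' \<in> S" "\<forall>x. norm (f x - f' x) \<le> d" using cl_approx[OF assms(1) d(1)] by blast
    obtain h' where h': "h' \<in> S" "\<forall>x. norm (h x - h' x) \<le> d" using cl_approx[OF assms(2) d(1)] by blast
    have "\<forall>x. norm (f x * h x - f' x * h' x) \<le> e"
    proof
      fix x
      have nf': "norm (f' x) \<le> B + 1"
        using B(1) f'(2) d(2) norm_triangle_ineq3[of "f x" "f' x"]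
        by (smt (verit) norm_minus_commute)
      have "f x * h x - f' x * h' x = (f x - f' x) * h x + f' x * (h x - h' x)"
        by (simp add: algebra_simps)
      then have "norm (f x * h x - f' x * h' x) \<le> norm (f x - f' x) * norm (h x) + norm (f' x) * norm (h x - h' x)"
        by (metis norm_mult norm_triangle_ineq)
      also have "\<dots> \<le> d * C + (B + 1) * d"
        using f'(2) h'(2) C nf' d(1) B(2) by (intro add_mono mult_mono) auto
      also have "\<dots> = d * (B + C + 1)" by (simp add: algebra_simps)
      also have "\<dots> \<le> e" by (rule d(3))
      finally show "norm (f x * h x - f' x * h' x) \<le> e" .
    qed
    then show "\<exists>g\<in>S. \<forall>x. norm (f x * h x - g x) \<le> e" using f' h' assms(3)
      by (intro bexI[of _ "\<lambda>x. f' x * h' x"]) auto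
  qed
qed


lemma subring_int_mult:
  fixes S :: "('e \<Rightarrow> int) set"
  assumes "is_subring_fun S" "g \<in> S"
  shows "(\<lambda>x. c * g x) \<in> S"
proof -
  have nat: "(\<lambda>x. int n * g x) \<in> S" for n
  proof (induction n)
    case 0 then show ?case using assms(1) unfolding is_subring_fun_def by simp
  next
    case (Suc n)
    have "\<forall>f\<in>S. \<forall>g\<in>S. (\<lambda>x. f x + g x) \<in> S" using assms(1) unfolding is_subring_fun_def by blast
    then have add: "\<And>f h. f \<in> S \<Longrightarrow> h \<in> S \<Longrightarrow> (\<lambda>x. f x + h x) \<in> S" by blast
    have "(\<lambda>x. int n * g x + g x) \<in> S" by (rule add[OF Suc assms(2)])
    then show ?case by (simp add: algebra_simps)
  qed
  show ?thesis
  proof (cases "c \<ge> 0")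
    case True
    then show ?thesis using nat[of "nat c"] by simp
  next
    case False
    have neg: "\<And>f. f \<in> S \<Longrightarrow> (\<lambda>x. - f x) \<in> S" using assms(1) unfolding is_subring_fun_def by blast
    have "(\<lambda>x. - (int (nat (- c)) * g x)) \<in> S" by (rule neg[OF nat[of "nat (-c)"]])
    then show ?thesis using False by simp
  qed
qed

theorem proposition5p1:
  fixes src rng :: "'e \<Rightarrow> 'v"
  shows "R_A src rng = sup_closure (fun_span (gens src rng)) \<and>
         frakR_A src rng = fun_span (gens src rng)"
proof
  let ?G = "gens src rng :: ('e \<Rightarrow> complex) set"
  let ?P = "fun_span ?G"
  let ?T = "sup_closure ?P"
  have Pl: "?P \<subseteq> linfty" using span_linfty by blast
  have PT: "?P \<subseteq> ?T" by (rule cl_sup[OF Pl])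
  have GT: "?G \<subseteq> ?T" using PT span_gen by blast
  have cT: "is_cstar_subalgebra ?T"
    unfolding is_cstar_subalgebra_def
  proof (intro conjI ballI allI)
    show "?T \<subseteq> linfty" using cl_linfty by blast
    show "(\<lambda>_. 0) \<in> ?T" using PT span_zero by blast
    show "(\<lambda>x. f x + g x) \<in> ?T" if "f \<in> ?T" "g \<in> ?T" for f g
      using cl_add[OF that] span_add by blast
    show "(\<lambda>x. c * f x) \<in> ?T" if "f \<in> ?T" for c f
      using cl_scale[OF that Pl span_zero] span_scale by blast
    show "(\<lambda>x. f x * g x) \<in> ?T" if "f \<in> ?T" "g \<in> ?T" for f g
      using cl_mult[OF that] span_mult by blast
    show "(\<lambda>x. cnj (f x)) \<in> ?T" if "f \<in> ?T" for f
      using cl_cnj[OF that] span_cnj by blast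
    show "sup_closure ?T \<subseteq> ?T" by (rule cl_idem)
  qed
  show "R_A src rng = ?T"
  proof
    show "R_A src rng \<subseteq> ?T" unfolding cstar_generated_def using cT GT by blast
    show "?T \<subseteq> R_A src rng" unfolding cstar_generated_def
    proof (rule Inter_greatest)
      fix S assume "S \<in> {S. is_cstar_subalgebra S \<and> ?G \<subseteq> S}"
      then have S: "is_cstar_subalgebra S" "?G \<subseteq> S" by auto
      have "?P \<subseteq> S"
      proof (rule span_sub)
        show "?G \<subseteq> S" by (rule S(2))
        show "(\<lambda>_. 0) \<in> S" using S(1) unfolding is_cstar_subalgebra_def by (elim conjE)
        show "\<forall>f\<in>S. \<forall>g\<in>S. (\<lambda>x. f x + g x) \<in> S" using S(1) unfolding is_cstar_subalgebra_def by (elim conjE)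
        have sc: "\<forall>c. \<forall>f\<in>S. (\<lambda>x. c * f x) \<in> S" using S(1) unfolding is_cstar_subalgebra_def by (elim conjE)
        show "(\<lambda>x. c * g x) \<in> S" if "g \<in> ?G" for c g
          using sc that S(2) by blast
      qed
      then have "?T \<subseteq> sup_closure S" by (rule cl_mono)
      also have "\<dots> \<subseteq> S" using S(1) unfolding is_cstar_subalgebra_def by (elim conjE)
      finally show "?T \<subseteq> S" .
    qed
  qed
next
  let ?G = "gens src rng :: ('e \<Rightarrow> int) set"
  let ?P = "fun_span ?G"
  have rP: "is_subring_fun ?P"
    unfolding is_subring_fun_def
  proof (intro conjI ballI)
    show "(\<lambda>_. 0) \<in> ?P" by (rule span_zero)
    show "(\<lambda>x. f x + g x) \<in> ?P" if "f \<in> ?P" "g \<in> ?P" for f g using span_add[OF that] .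
    show "(\<lambda>x. - f x) \<in> ?P" if "f \<in> ?P" for f using span_scale[OF that, of "-1"] by simp
    show "(\<lambda>x. f x * g x) \<in> ?P" if "f \<in> ?P" "g \<in> ?P" for f g using span_mult[OF that] .
  qed
  have GP: "?G \<subseteq> ?P" using span_gen by blast
  show "frakR_A src rng = ?P"
  proof
    show "frakR_A src rng \<subseteq> ?P" unfolding ring_generated_def using rP GP by blast
    show "?P \<subseteq> frakR_A src rng" unfolding ring_generated_def
    proof (rule Inter_greatest)
      fix S assume "S \<in> {S. is_subring_fun S \<and> ?G \<subseteq> S}"
      then have S: "is_subring_fun S" "?G \<subseteq> S" by auto
      show "?P \<subseteq> S"
      proof (rule span_sub)
        show "?G \<subseteq> S" by (rule S(2))
        show "(\<lambda>_. 0) \<in> S" using S(1) unfolding is_subring_fun_def by blast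
        show "\<forall>f\<in>S. \<forall>g\<in>S. (\<lambda>x. f x + g x) \<in> S" using S(1) unfolding is_subring_fun_def by blast
        show "(\<lambda>x. c * g x) \<in> S" if "g \<in> ?G" for c g
          using subring_int_mult[OF S(1)] that S(2) by blast
      qed
    qed
  qed
qed

end
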